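(* Let $(X,d)$ be a metric space, $\lambda\ge0$, and $\ell\in\mathrm{LSC}(X)$ with $\inf_X\ell=0$. A function $u:X\to\mathbb{R}$ is a solution of $(\mathcal{G}_\lambda)$ if and only if it is a V-solution of $(\mathcal{G}_\lambda)$.
   Context: $\mathrm{LSC}(X)$ is the set of real-valued lower semicontinuous functions. Global slope: $G[u](x)=\sup_{y\neq x}\frac{(u(x)-u(y))_+}{d(x,y)}$ if $u(x)<+\infty$, $G[u](x)=+\infty$ otherwise. Pointwise notions for $(\mathcal{G}_\lambda)$: a subsolution is $u$ with $\inf_Xu=0$ and $\lambda u+G[u]\le\ell$ on $X$; a supersolution is a lower semicontinuous $v$ with $\inf_Xv=0$ and $\lambda v+G[v]\ge\ell$ on $X$; a solution is a lower semicontinuous function that is both. Viscosity notions: $u:X\to[0,+\infty)$ is a V-subsolution if $\inf_Xu=0$ and for every $x\in X$ and every $\phi:X\to\mathbb{R}$ with $\phi\ge u$, $\phi(x)=u(x)$ and $G[\phi](x)<+\infty$, one has $\lambda u(x)+G[\phi](x)\le\ell(x)$. A lower semicontinuous $v:X\to[0,+\infty)$ is a V-supersolution if $\inf_Xv=0$ and for every $x\in X$ and every $\psi:X\to\mathbb{R}$ with $\psi\le v$, $\psi(x)=v(x)$ and $G[\psi](x)<+\infty$, one has $\lambda v(x)+G[\psi](x)\ge\ell(x)$. A V-solution is a function in $\mathrm{LSC}(X)$ that is both a V-subsolution and a V-supersolution. *)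

theory Defs
  imports "HOL-Analysis.Analysis"
begin

definition lsc :: "('a::metric_space \<Rightarrow> real) \<Rightarrow> bool" where
  "lsc f \<longleftrightarrow> (\<forall>x t. t < f x \<longrightarrow> (\<forall>\<^sub>F y in nhds x. t < f y))"

text \<open>inf over X of f equals 0 (computed in the extended reals, so that
  it is meaningful also for unbounded functions).\<close>
definition inf_zero :: "('a \<Rightarrow> real) \<Rightarrow> bool" where
  "inf_zero f \<longleftrightarrow> (INF x. ereal (f x)) = 0"

text \<open>The supremum of nonnegative quantities is taken together with 0, so that
  the value is 0 on a one-point space.\<close>
definition global_slope :: "('a::metric_space \<Rightarrow> real) \<Rightarrow> 'a \<Rightarrow> ereal" where
  "global_slope u x =
     sup 0 (SUP y\<in>UNIV - {x}. ereal (max 0 (u x - u y) / dist x y))"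

definition is_subsolution :: "real \<Rightarrow> ('a::metric_space \<Rightarrow> real) \<Rightarrow> ('a \<Rightarrow> real) \<Rightarrow> bool" where
  "is_subsolution lam l u \<longleftrightarrow> inf_zero u \<and>
     (\<forall>x. ereal (lam * u x) + global_slope u x \<le> ereal (l x))"

definition is_supersolution :: "real \<Rightarrow> ('a::metric_space \<Rightarrow> real) \<Rightarrow> ('a \<Rightarrow> real) \<Rightarrow> bool" where
  "is_supersolution lam l v \<longleftrightarrow> lsc v \<and> inf_zero v \<and>
     (\<forall>x. ereal (lam * v x) + global_slope v x \<ge> ereal (l x))"

definition is_solution :: "real \<Rightarrow> ('a::metric_space \<Rightarrow> real) \<Rightarrow> ('a \<Rightarrow> real) \<Rightarrow> bool" where
  "is_solution lam l u \<longleftrightarrow> lsc u \<and> is_subsolution lam l u \<and> is_supersolution lam l u"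

definition is_V_subsolution :: "real \<Rightarrow> ('a::metric_space \<Rightarrow> real) \<Rightarrow> ('a \<Rightarrow> real) \<Rightarrow> bool" where
  "is_V_subsolution lam l u \<longleftrightarrow> (\<forall>x. 0 \<le> u x) \<and> inf_zero u \<and>
     (\<forall>x \<phi>. (\<forall>y. u y \<le> \<phi> y) \<longrightarrow> \<phi> x = u x \<longrightarrow> global_slope \<phi> x < \<infinity> \<longrightarrow>
        ereal (lam * u x) + global_slope \<phi> x \<le> ereal (l x))"

definition is_V_supersolution :: "real \<Rightarrow> ('a::metric_space \<Rightarrow> real) \<Rightarrow> ('a \<Rightarrow> real) \<Rightarrow> bool" where
  "is_V_supersolution lam l v \<longleftrightarrow> lsc v \<and> (\<forall>x. 0 \<le> v x) \<and> inf_zero v \<and>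
     (\<forall>x \<psi>. (\<forall>y. \<psi> y \<le> v y) \<longrightarrow> \<psi> x = v x \<longrightarrow> global_slope \<psi> x < \<infinity> \<longrightarrow>
        ereal (lam * v x) + global_slope \<psi> x \<ge> ereal (l x))"

definition is_V_solution :: "real \<Rightarrow> ('a::metric_space \<Rightarrow> real) \<Rightarrow> ('a \<Rightarrow> real) \<Rightarrow> bool" where
  "is_V_solution lam l u \<longleftrightarrow> lsc u \<and> is_V_subsolution lam l u \<and> is_V_supersolution lam l u"

end

theory Submission
  imports Defs
begin

lemma gs_nonneg: "0 \<le> global_slope f x"
  unfolding global_slope_def by simp

lemma gs_mono:
  assumes "\<And>y. g x - g y \<le> f x - f y"
  shows "global_slope g x \<le> global_slope f x"
  unfolding global_slope_def
proof (rule sup_mono[OF order_refl], rule SUP_mono, intro bexI)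
  fix y assume y: "y \<in> UNIV - {x}"
  show "ereal (max 0 (g x - g y) / dist x y) \<le> ereal (max 0 (f x - f y) / dist x y)"
    using assms[of y] by (simp add: divide_right_mono)
qed

lemma gs_upper:
  assumes "y \<noteq> x"
  shows "ereal (max 0 (f x - f y) / dist x y) \<le> global_slope f x"
  unfolding global_slope_def
  by (rule order_trans[OF _ sup_ge2], rule SUP_upper) (use assms in auto)

lemma gs_bound:
  assumes "c \<ge> 0" "\<And>y. f x - f y \<le> c * dist x y"
  shows "global_slope f x \<le> ereal c"
  unfolding global_slope_def
proof (rule sup_least)
  show "0 \<le> ereal c" using assms by simp
  show "(SUP y\<in>UNIV - {x}. ereal (max 0 (f x - f y) / dist x y)) \<le> ereal c"
  proof (rule SUP_least)
    fix y assume y: "y \<in> UNIV - {x}"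
    then have d: "dist x y > 0" by auto
    have "max 0 (f x - f y) \<le> c * dist x y" using assms(1) assms(2)[of y] d by auto
    then have "max 0 (f x - f y) / dist x y \<le> c" using d by (simp add: divide_le_eq)
    then show "ereal (max 0 (f x - f y) / dist x y) \<le> ereal c" by simp
  qed
qed

lemma gs_witness:
  assumes "a \<ge> 0" "global_slope f x > ereal a"
  shows "\<exists>y. y \<noteq> x \<and> max 0 (f x - f y) / dist x y > a"
proof -
  have "ereal a < (SUP y\<in>UNIV - {x}. ereal (max 0 (f x - f y) / dist x y))"
    using assms unfolding global_slope_def by (auto simp: sup_max less_max_iff_disj)
  then show ?thesis by (auto simp: less_SUP_iff)
qed

lemma inf_zero_nonneg: "inf_zero u \<Longrightarrow> 0 \<le> u x"
proof -
  assume "inf_zero u"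
  then have "0 \<le> ereal (u x)" unfolding inf_zero_def by (metis INF_lower UNIV_I)
  then show ?thesis by simp
qed

lemma sub_to_V:
  assumes "is_subsolution lam l u"
  shows "is_V_subsolution lam l u"
  unfolding is_V_subsolution_def
proof (intro conjI allI impI)
  show "inf_zero u" using assms is_subsolution_def by blast
  then show "\<And>x. 0 \<le> u x" by (rule inf_zero_nonneg)
  fix x \<phi> assume h: "\<forall>y. u y \<le> \<phi> y" "\<phi> x = u x"
  have "global_slope \<phi> x \<le> global_slope u x"
    by (rule gs_mono) (use h in auto)
  then have "ereal (lam * u x) + global_slope \<phi> x \<le> ereal (lam * u x) + global_slope u x"
    by (simp add: add_left_mono)
  also have "\<dots> \<le> ereal (l x)" using assms unfolding is_subsolution_def by blast
  finally show "ereal (lam * u x) + global_slope \<phi> x \<le> ereal (l x)" .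
qed

lemma super_to_V:
  assumes "is_supersolution lam l u"
  shows "is_V_supersolution lam l u"
  unfolding is_V_supersolution_def
proof (intro conjI allI impI)
  show "lsc u" using assms is_supersolution_def by blast
  show "inf_zero u" using assms is_supersolution_def by blast
  then show "\<And>x. 0 \<le> u x" by (rule inf_zero_nonneg)
  fix x \<psi> assume h: "\<forall>y. \<psi> y \<le> u y" "\<psi> x = u x"
  have "global_slope u x \<le> global_slope \<psi> x"
    by (rule gs_mono) (use h in auto)
  have "ereal (l x) \<le> ereal (lam * u x) + global_slope u x"
    using assms unfolding is_supersolution_def by blast
  also have "\<dots> \<le> ereal (lam * u x) + global_slope \<psi> x"
    using \<open>global_slope u x \<le> global_slope \<psi> x\<close> by (simp add: add_left_mono)
  finally show "ereal (l x) \<le> ereal (lam * u x) + global_slope \<psi> x" .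
qed

lemma V_to_super:
  assumes "is_V_supersolution lam l u"
  shows "is_supersolution lam l u"
  unfolding is_supersolution_def
proof (intro conjI allI)
  show "lsc u" "inf_zero u" using assms is_V_supersolution_def by blast+
  fix x
  show "ereal (l x) \<le> ereal (lam * u x) + global_slope u x"
  proof (cases "global_slope u x < \<infinity>")
    case True
    then show ?thesis using assms unfolding is_V_supersolution_def by blast
  next
    case False
    then have "global_slope u x = \<infinity>" by simp
    then show ?thesis by simp
  qed
qed

lemma V_to_sub:
  assumes "is_V_subsolution lam l u"
  shows "is_subsolution lam l u"
  unfolding is_subsolution_def
proof (intro conjI allI)
  show "inf_zero u" using assms is_V_subsolution_def by blast
  fix x
  have V: "\<And>\<phi>. (\<forall>y. u y \<le> \<phi> y) \<Longrightarrow> \<phi> x = u x \<Longrightarrow> global_slope \<phi> x < \<infinity> \<Longrightarrow>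
        ereal (lam * u x) + global_slope \<phi> x \<le> ereal (l x)"
    using assms unfolding is_V_subsolution_def by blast
  define \<phi> where "\<phi> c y = max (u y) (u x - c * dist x y)" for c y
  have ph1: "\<forall>y. u y \<le> \<phi> c y" for c unfolding \<phi>_def by auto
  have ph2: "\<phi> c x = u x" for c unfolding \<phi>_def by auto
  have ph3: "global_slope (\<phi> c) x \<le> ereal c" if "c \<ge> 0" for c
    by (rule gs_bound[OF that]) (auto simp: \<phi>_def)
  have ph4: "global_slope (\<phi> c) x < \<infinity>" if "c \<ge> 0" for c
  proof -
    have "ereal c < \<infinity>" by simp
    then show ?thesis using ph3[OF that] by (rule le_less_trans[rotated])
  qed
  have "ereal (lam * u x) + global_slope (\<phi> 0) x \<le> ereal (l x)"
    using V[OF ph1 ph2 ph4] by simp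
  moreover have "0 \<le> global_slope (\<phi> 0) x" by (rule gs_nonneg)
  ultimately have "ereal (lam * u x) + 0 \<le> ereal (l x)"
    using add_left_mono order_trans by blast
  then have a0: "lam * u x \<le> l x" by simp
  have "global_slope u x \<le> ereal (l x - lam * u x)"
  proof (rule ccontr)
    assume "\<not> ?thesis"
    then have "global_slope u x > ereal (l x - lam * u x)" by simp
    then obtain y where y: "y \<noteq> x" "max 0 (u x - u y) / dist x y > l x - lam * u x"
      using gs_witness[of "l x - lam * u x" u x] a0 by auto
    define c where "c = max 0 (u x - u y) / dist x y"
    have c0: "c \<ge> 0" unfolding c_def by simp
    have cpos: "c > 0" using y a0 unfolding c_def by linarith
    have d: "dist x y > 0" using y by simp
    have "u x - u y > 0"
    proof (rule ccontr)
      assume "\<not> u x - u y > 0"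
      then have "c = 0" unfolding c_def by simp
      with cpos show False by simp
    qed
    then have cy: "c * dist x y = u x - u y" unfolding c_def using d by simp
    have "\<phi> c y = u y" unfolding \<phi>_def using cy by simp
    then have "ereal c \<le> global_slope (\<phi> c) x"
      using gs_upper[OF y(1), of "\<phi> c"] ph2[of c] unfolding c_def by simp
    then have "ereal (lam * u x) + ereal c \<le> ereal (l x)"
      using V[OF ph1 ph2 ph4[OF c0]]
      by (meson add_left_mono order_trans)
    then show False using y(2) unfolding c_def by simp
  qed
  then have "ereal (lam * u x) + global_slope u x \<le> ereal (lam * u x) + ereal (l x - lam * u x)"
    by (rule add_left_mono)
  then show "ereal (lam * u x) + global_slope u x \<le> ereal (l x)" by simp
qed

theorem theorem4p4:
  fixes lam :: real and l u :: "'a::metric_space \<Rightarrow> real"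
  assumes "lam \<ge> 0" and "lsc l" and "inf_zero l"
  shows "is_solution lam l u \<longleftrightarrow> is_V_solution lam l u"
proof
  assume "is_solution lam l u"
  then show "is_V_solution lam l u" unfolding is_solution_def is_V_solution_def
    using sub_to_V super_to_V by blast
next
  assume "is_V_solution lam l u"
  then show "is_solution lam l u" unfolding is_solution_def is_V_solution_def
    using V_to_sub V_to_super by blast
qed

end
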